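(* For any integers $n\ge2$ and $1\le m\le (n-1)^2$, the Laplacian matrix $L(n,m)$ of $\mathbb G(n,m)$ satisfies $[L(n,m)]_{in}=0$ for every $i\in\{1,\dots,n-1\}$.
   Context: For integers $n\ge2$ and $0\le m\le n(n-1)$, $\mathbb G(n,m)$ is the simple directed graph on vertex set $\{1,\dots,n\}$ whose arc set is $\{(\lceil \frac{i}{n-1}\rceil,\ n-((i-1)\bmod n)) : i=1,\dots,m\}$, where an arc $(j,k)$ goes from $j$ to $k$ and $a\bmod b\in\{0,\dots,b-1\}$; these $m$ pairs are pairwise distinct pairs of distinct vertices. The (in-degree) Laplacian of a directed graph is $L=D-A$, $D$ the diagonal matrix of in-degrees, $A_{ij}=1$ if $(j,i)$ is an arc and $0$ otherwise; $[L]_{ij}$ denotes its $ij$th entry. *)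

theory Defs
  imports Complex_Main
begin

text \<open>Arc set of the digraph G(n,m) on vertices 1..n: the i-th arc (i = 1..m) goes
  from ceil(i/(n-1)) to n - ((i-1) mod n).  An arc (j,k) goes from j to k.\<close>
definition G_arcs :: "nat \<Rightarrow> nat \<Rightarrow> (nat \<times> nat) set" where
  "G_arcs n m = {(nat \<lceil>real i / real (n - 1)\<rceil>, n - ((i - 1) mod n)) | i. 1 \<le> i \<and> i \<le> m}"

definition G_indeg :: "nat \<Rightarrow> nat \<Rightarrow> nat \<Rightarrow> nat" where
  "G_indeg n m k = card {j. (j, k) \<in> G_arcs n m}"

definition G_laplacian :: "nat \<Rightarrow> nat \<Rightarrow> nat \<Rightarrow> nat \<Rightarrow> int" where
  "G_laplacian n m i j =
     (if i = j then int (G_indeg n m i) else 0) - (if (j, i) \<in> G_arcs n m then 1 else 0)"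

end

theory Submission
  imports Defs
begin

lemma src_bound:
  fixes n k :: nat
  assumes "n \<ge> 2" "k \<le> (n - 1)^2"
  shows "nat \<lceil>real k / real (n - 1)\<rceil> \<le> n - 1"
proof -
  have p: "real (n - 1) > 0" using assms(1) by simp
  have "real k \<le> real (n - 1) * real (n - 1)"
    using assms(2) by (metis of_nat_le_iff of_nat_mult power2_eq_square)
  hence "real k / real (n - 1) \<le> real (n - 1)"
    using p by (simp add: divide_le_eq mult.commute)
  hence "\<lceil>real k / real (n - 1)\<rceil> \<le> int (n - 1)"
    by (metis ceiling_le_iff of_int_of_nat_eq)
  thus ?thesis by (metis nat_int nat_mono)
qed

theorem lemma15:
  fixes n m i :: nat
  assumes "n \<ge> 2" and "1 \<le> m" and "m \<le> (n - 1)^2"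
    and "1 \<le> i" and "i \<le> n - 1"
  shows "G_laplacian n m i n = 0"
proof -
  have "(n, i) \<notin> G_arcs n m"
  proof
    assume "(n, i) \<in> G_arcs n m"
    then obtain k where k: "k \<le> m" "n = nat \<lceil>real k / real (n - 1)\<rceil>"
      unfolding G_arcs_def by auto
    have "nat \<lceil>real k / real (n - 1)\<rceil> \<le> n - 1"
      using src_bound[of n k] assms k(1) by simp
    with k(2) assms(1) show False by simp
  qed
  moreover have "i \<noteq> n" using assms by simp
  ultimately show ?thesis unfolding G_laplacian_def by simp
qed

end
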